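(* Let $n\geq 2$ be an integer, and for real $x$ let $\omega=\frac{x+\sqrt{x^2+4}}{2}$. Then $$\Psi_n(x)=\begin{cases}-\dfrac{\Phi_n(-\omega^2)}{\omega^{\varphi(n)}}&\text{if } n=2;\\[2ex] \dfrac{\Phi_n(-\omega^2)}{\omega^{\varphi(n)}}&\text{if } n\geq 3.\end{cases}$$ Equivalently, since $\omega-\omega^{-1}=x$, $\Psi_n(\omega-\omega^{-1})$ equals the right-hand side.
   Context: The Fibonacci polynomials are defined by $F_1(x)=1$, $F_2(x)=x$, and $F_n(x)=xF_{n-1}(x)+F_{n-2}(x)$ for $n\geq 3$. For $n\geq 2$, the $n$-th fibotomic polynomial $\Psi_n(x)\in\mathbb{Z}[x]$ is the product of the monic irreducible factors of $F_n(x)$ which are not factors of $F_k(x)$ for any $k<n$; also $\Psi_1(x)=1$. Thus $F_n(x)=\prod_{d\mid n}\Psi_d(x)$ for all $n\geq1$. $\Phi_n(x)$ denotes the $n$-th cyclotomic polynomial and $\varphi$ is Euler's totient function. *)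

theory Defs
  imports Complex_Main "HOL-Computational_Algebra.Computational_Algebra" "HOL-Number_Theory.Number_Theory"
begin

fun fib_poly :: "nat \<Rightarrow> int poly" where
  "fib_poly 0 = 0"
| "fib_poly (Suc 0) = 1"
| "fib_poly (Suc (Suc n)) = [:0, 1:] * fib_poly (Suc n) + fib_poly n"

definition fibotomic :: "nat \<Rightarrow> rat poly" where
  "fibotomic n = \<Prod>{p :: rat poly. lead_coeff p = 1 \<and> irreducible p
      \<and> p dvd map_poly of_int (fib_poly n)
      \<and> (\<forall>k. 1 \<le> k \<and> k < n \<longrightarrow> \<not> p dvd map_poly of_int (fib_poly k))}"

definition cyclotomic :: "nat \<Rightarrow> complex poly" where
  "cyclotomic n = (\<Prod>k \<in> {k. 1 \<le> k \<and> k \<le> n \<and> coprime k n}.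
      [:- cis (2 * pi * real k / real n), 1:])"

end

theory Submission
  imports Defs "HOL-Computational_Algebra.Field_as_Ring" "HOL-Computational_Algebra.Polynomial_Factorial"
begin

lemma map_poly_add_h:
  assumes "f 0 = 0" "\<And>a b. f (a+b) = f a + f b"
  shows "map_poly f (p+q) = map_poly f p + map_poly f q"
  by (intro poly_eqI) (simp add: coeff_map_poly assms)

lemma map_poly_mult_h:
  fixes f :: "'a::comm_semiring_0 \<Rightarrow> 'b::comm_semiring_0"
  assumes f0: "f 0 = 0" and fa: "\<And>a b. f (a+b) = f a + f b" and fm: "\<And>a b. f (a*b) = f a * f b"
  shows "map_poly f (p*q) = map_poly f p * map_poly f q"
proof (induction p)
  case 0 show ?case by (simp add: f0)
next
  case (pCons a p)
  have "map_poly f (pCons a p * q) = map_poly f (Polynomial.smult a q) + map_poly f (pCons 0 (p * q))"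
    by (simp add: map_poly_add_h f0 fa)
  also have "\<dots> = Polynomial.smult (f a) (map_poly f q) + pCons 0 (map_poly f p * map_poly f q)"
    by (simp add: map_poly_smult map_poly_pCons f0 fm pCons.IH)
  also have "\<dots> = map_poly f (pCons a p) * map_poly f q"
    by (simp add: map_poly_pCons f0)
  finally show ?case .
qed

lemma map_poly_prod_h:
  fixes f :: "'a::comm_semiring_1 \<Rightarrow> 'b::comm_semiring_1"
  assumes f0: "f 0 = 0" and f1: "f 1 = 1" and fa: "\<And>a b. f (a+b) = f a + f b" and fm: "\<And>a b. f (a*b) = f a * f b"
  shows "map_poly f (\<Prod>i\<in>A. g i) = (\<Prod>i\<in>A. map_poly f (g i))"
proof (induction A rule: infinite_finite_induct)
  case (infinite A) then show ?case by (simp add: f1)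
next
  case empty then show ?case by (simp add: f1)
next
  case (insert x F) then show ?case by (simp add: map_poly_mult_h[OF f0 fa fm])
qed

lemma poly_map_poly_h:
  fixes f :: "'a::comm_semiring_0 \<Rightarrow> 'b::comm_semiring_0"
  assumes f0: "f 0 = 0" and fa: "\<And>a b. f (a+b) = f a + f b" and fm: "\<And>a b. f (a*b) = f a * f b"
  shows "f (poly p x) = poly (map_poly f p) (f x)"
  by (induction p) (simp_all add: f0 fa fm map_poly_pCons)

lemma of_real_of_rat_c: "complex_of_real (of_rat q) = of_rat q"
proof -
  obtain a b where "quotient_of q = (a, b)" by (cases "quotient_of q")
  then have "q = of_int a / of_int b" by (rule quotient_of_div)
  then show ?thesis by (simp add: of_rat_divide)
qed

definition cf :: "nat \<Rightarrow> complex poly" where "cf n = map_poly of_int (fib_poly n)"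
definition rf :: "nat \<Rightarrow> rat poly" where "rf n = map_poly of_int (fib_poly n)"

lemma rf_cf: "map_poly of_rat (rf n) = cf n"
  unfolding rf_def cf_def by (subst map_poly_map_poly) (auto simp: o_def)

lemma cf_rec: "cf (Suc (Suc n)) = [:0,1:] * cf (Suc n) + cf n"
  unfolding cf_def by (simp add: map_poly_add_h map_poly_mult_h map_poly_pCons)

lemma cf_0: "cf 0 = 0" and cf_1: "cf (Suc 0) = 1"
  unfolding cf_def by simp_all

lemma fib_deg: "degree (fib_poly (Suc n)) = n \<and> lead_coeff (fib_poly (Suc n)) = 1"
proof (induction n rule: less_induct)
  case (less n)
  show ?case
  proof (cases n)
    case 0 then show ?thesis by simp
  next
    case (Suc m)
    note IH1 = less[of m, OF _]
    show ?thesis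
    proof (cases m)
      case 0 then show ?thesis using Suc by simp
    next
      case (Suc k)
      have A: "degree (fib_poly (Suc m)) = m" "lead_coeff (fib_poly (Suc m)) = 1" using less[of m] \<open>n = Suc m\<close> by auto
      have B: "degree (fib_poly (Suc k)) = k" using less[of k] \<open>n = Suc m\<close> Suc by auto
      have nz: "fib_poly (Suc m) \<noteq> 0" using A by auto
      have C: "[:0,1:] * fib_poly (Suc m) = pCons 0 (fib_poly (Suc m))" by simp
      have D: "degree ([:0,1:] * fib_poly (Suc m)) = Suc m" using C A nz by simp
      have E: "degree (fib_poly (Suc k)) < degree ([:0,1:] * fib_poly (Suc m))" using B D Suc by simp
      have "fib_poly (Suc n) = [:0,1:] * fib_poly (Suc m) + fib_poly (Suc k)"
        using \<open>n = Suc m\<close> Suc by simp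
      moreover have "degree \<dots> = n" using degree_add_eq_left[OF E] D \<open>n = Suc m\<close> by simp
      moreover have "lead_coeff ([:0,1:] * fib_poly (Suc m) + fib_poly (Suc k)) = 1"
        using degree_add_eq_left[OF E] D E A C nz by (simp add: coeff_eq_0)
      ultimately show ?thesis by simp
    qed
  qed
qed

lemma sin_rec: "sin (real (Suc (Suc m)) * t) = 2 * cos t * sin (real (Suc m) * t) - sin (real m * t)"
proof -
  have a: "real (Suc (Suc m)) * t = real (Suc m) * t + t" by (simp add: distrib_right)
  have b: "real m * t = real (Suc m) * t - t" by (simp add: distrib_right)
  show ?thesis unfolding a b sin_add sin_diff by simp
qed

lemma cf_step: "\<i> * c * poly (cf (Suc (Suc m))) z
      = z * (\<i> * c * poly (cf (Suc m)) z) + \<i> * c * poly (cf m) z"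
  by (simp add: cf_rec distrib_left mult.left_commute)

lemma cf_trig_aux:
  "\<i> * of_real (sin t) * poly (cf m) (2 * \<i> * of_real (cos t)) = \<i>^m * of_real (sin (real m * t))
 \<and> \<i> * of_real (sin t) * poly (cf (Suc m)) (2 * \<i> * of_real (cos t)) = \<i>^(Suc m) * of_real (sin (real (Suc m) * t))"
proof (induction m)
  case 0 then show ?case by (simp add: cf_0 cf_1)
next
  case (Suc m)
  have "\<i> * of_real (sin t) * poly (cf (Suc (Suc m))) (2 * \<i> * of_real (cos t))
      = (2 * \<i> * of_real (cos t)) * (\<i>^(Suc m) * of_real (sin (real (Suc m) * t))) + \<i>^m * of_real (sin (real m * t))"
    using Suc.IH cf_step[of "of_real (sin t)" m "2 * \<i> * of_real (cos t)"] by simp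
  also have "\<dots> = \<i>^m * (of_real (sin (real m * t)) - 2 * of_real (cos t) * of_real (sin (real (Suc m) * t)))"
    by (simp add: algebra_simps)
  also have "\<dots> = \<i>^(Suc (Suc m)) * of_real (sin (real (Suc (Suc m)) * t))"
    unfolding sin_rec by (simp add: algebra_simps)
  finally show ?case using Suc.IH by simp
qed

definition rr :: "nat \<Rightarrow> nat \<Rightarrow> complex" where
  "rr n k = 2 * \<i> * complex_of_real (cos (real k * pi / real n))"

lemma angle_bounds:
  assumes "0 < k" "k < n"
  shows "0 < real k * pi / real n" "real k * pi / real n < pi"
proof -
  show "0 < real k * pi / real n" using assms by simp
  have "real k * pi < real n * pi" using assms by simp
  then show "real k * pi / real n < pi" using assms by (simp add: divide_less_eq mult.commute)
qed

lemma rr_root_iff: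
  assumes "0 < k" "k < n"
  shows "poly (cf j) (rr n k) = 0 \<longleftrightarrow> n dvd j * k"
proof -
  define t where "t = real k * pi / real n"
  have "0 < t" "t < pi" using angle_bounds[OF assms] by (auto simp: t_def)
  then have st: "sin t \<noteq> 0" using sin_gt_zero[of t] by linarith
  have "poly (cf j) (rr n k) = 0 \<longleftrightarrow> \<i> * of_real (sin t) * poly (cf j) (2 * \<i> * of_real (cos t)) = 0"
    using st by (simp add: rr_def t_def)
  also have "\<dots> \<longleftrightarrow> sin (real j * t) = 0" using cf_trig_aux[of t j] by simp
  also have "\<dots> \<longleftrightarrow> (\<exists>i::int. real j * t = of_int i * pi)" by (rule sin_zero_iff_int2)
  also have "\<dots> \<longleftrightarrow> (\<exists>i::int. int (j * k) = i * int n)"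
  proof -
    have "real j * t = of_int i * pi \<longleftrightarrow> int (j * k) = i * int n" for i
    proof -
      have n0: "real n \<noteq> 0" using assms by simp
      have "real j * t = (real j * real k / real n) * pi" by (simp add: t_def)
      then have "real j * t = of_int i * pi \<longleftrightarrow> (real j * real k / real n) * pi = of_int i * pi"
        by simp
      also have "\<dots> \<longleftrightarrow> real j * real k / real n = of_int i"
        by (metis mult_cancel_right pi_neq_zero)
      also have "\<dots> \<longleftrightarrow> real j * real k = of_int i * real n" using n0 by (simp add: divide_eq_eq)
      also have "\<dots> \<longleftrightarrow> real_of_int (int (j*k)) = real_of_int (i * int n)" by simp
      also have "\<dots> \<longleftrightarrow> int (j * k) = i * int n" by (rule of_int_eq_iff)
      finally show ?thesis .
    qed
    then show ?thesis by simp
  qed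
  also have "\<dots> \<longleftrightarrow> int n dvd int (j * k)" by (auto simp: dvd_def mult.commute)
  also have "\<dots> \<longleftrightarrow> n dvd j * k" by (rule int_dvd_int_iff)
  finally show ?thesis .
qed

lemma rr_inj:
  assumes "0 < k" "k < n" "0 < l" "l < n" "rr n k = rr n l"
  shows "k = l"
proof -
  have "cos (real k * pi / real n) = cos (real l * pi / real n)" using assms(5) by (simp add: rr_def)
  moreover note A = angle_bounds[OF assms(1,2)] and B = angle_bounds[OF assms(3,4)]
  ultimately have e: "real k * pi / real n = real l * pi / real n"
    using cos_inj_pi[of "real k * pi / real n" "real l * pi / real n"] by linarith
  have "real n \<noteq> 0" using assms by simp
  then have "real k * pi = real l * pi" using e divide_cancel_right by blast
  then have "real k = real l" using mult_cancel_right pi_neq_zero by blast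
  then show ?thesis by simp
qed

lemma monic_normalize: "lead_coeff (p::rat poly) = 1 \<Longrightarrow> normalize p = p"
  by (simp add: normalize_poly_def pCons_one)

lemma normalize_monic:
  assumes "(p::rat poly) \<noteq> 0" "normalize p = p"
  shows "lead_coeff p = 1"
proof -
  have "unit_factor p * normalize p = p" by (rule unit_factor_mult_normalize)
  then have "[:lead_coeff p:] * p = p" using assms(2) by (simp add: unit_factor_poly_def)
  then have "Polynomial.smult (lead_coeff p) p = p" by simp
  then have "lead_coeff p * lead_coeff p = lead_coeff p" by (metis coeff_smult)
  moreover have "lead_coeff p \<noteq> 0" using assms(1) by simp
  ultimately show ?thesis by (metis mult_cancel_right2)
qed

lemma roots_prod_dvd:
  fixes p :: "'a::idom poly"
  assumes "finite R" "\<And>r. r \<in> R \<Longrightarrow> poly p r = 0"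
  shows "(\<Prod>r\<in>R. [:-r,1:]) dvd p"
  using assms
proof (induction R arbitrary: p rule: finite_induct)
  case empty then show ?case by simp
next
  case (insert a R)
  have "[:-a,1:] dvd p" using insert.prems by (simp add: dvd_iff_poly_eq_0)
  then obtain q where q: "p = [:-a,1:] * q" by (elim dvdE)
  have "poly q r = 0" if "r \<in> R" for r
  proof -
    have "r \<noteq> a" using that insert.hyps by auto
    moreover have "poly p r = 0" using insert.prems that by auto
    ultimately show ?thesis using q by simp
  qed
  then have "(\<Prod>r\<in>R. [:-r,1:]) dvd q" using insert.IH by blast
  moreover have "(\<Prod>r\<in>insert a R. [:-r,1:]) = [:-a,1:] * (\<Prod>r\<in>R. [:-r,1:])"
    using insert.hyps by (simp del: mult_pCons_left)
  ultimately show ?case using q by (metis mult_dvd_mono dvd_refl)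
qed

lemma monic_lin_prod: "lead_coeff (\<Prod>r\<in>R. [:-r,1::'a::idom:]) = 1"
  by (simp add: lead_coeff_prod)

lemma degree_lin_prod: "finite R \<Longrightarrow> degree (\<Prod>r\<in>R. [:-r,1::'a::idom:]) = card R"
proof (induction R rule: finite_induct)
  case (insert x F)
  have nz: "(\<Prod>r\<in>F. [:-r,1::'a:]) \<noteq> 0" by (simp add: prod_zero_iff[OF insert.hyps(1)] del: mult_pCons_left)
  have "(\<Prod>r\<in>insert x F. [:-r,1::'a:]) = [:-x,1:] * (\<Prod>r\<in>F. [:-r,1:])"
    using insert.hyps by (simp del: mult_pCons_left)
  also have "degree \<dots> = 1 + card F" using nz insert.IH by (subst degree_mult_eq) (auto simp del: mult_pCons_left)
  finally show ?case using insert.hyps by simp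
qed simp

lemma monic_dvd_eq:
  fixes p q :: "'a::field poly"
  assumes "p dvd q" "q \<noteq> 0" "degree q \<le> degree p" "lead_coeff p = 1" "lead_coeff q = 1"
  shows "p = q"
proof -
  obtain c where c: "q = p * c" using assms(1) by (elim dvdE)
  have "p \<noteq> 0" "c \<noteq> 0" using c assms(2) by auto
  then have "degree q = degree p + degree c" using c degree_mult_eq by blast
  then have "degree c = 0" using assms(3) by simp
  then obtain a where a: "c = [:a:]" by (elim degree_eq_zeroE)
  have "lead_coeff q = lead_coeff p * a" using c a by (simp add: lead_coeff_mult)
  then have "a = 1" using assms by simp
  then show ?thesis using c a by simp
qed

lemma share_root_dvd:
  fixes p q :: "rat poly" and z :: complex
  assumes "irreducible p" "poly (map_poly of_rat p) z = 0" "poly (map_poly of_rat q) z = 0"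
  shows "p dvd q"
proof (rule ccontr)
  assume "\<not> p dvd q"
  moreover have "prime_elem p" using assms(1) by (simp add: prime_elem_iff_irreducible)
  ultimately have "coprime p q" using prime_elem_imp_coprime by blast
  then have g: "gcd p q = 1" by (simp add: coprime_iff_gcd_eq_1)
  define s where "s = fst (bezout_coefficients p q)"
  define t where "t = snd (bezout_coefficients p q)"
  have "s * p + t * q = 1" using bezout_coefficients_fst_snd[of p q] g by (simp add: s_def t_def)
  then have "map_poly (of_rat :: rat \<Rightarrow> complex) (s * p + t * q) = 1" by simp
  then have "map_poly of_rat s * map_poly of_rat p + map_poly of_rat t * map_poly of_rat q = (1 :: complex poly)"
    by (simp add: map_poly_add_h map_poly_mult_h of_rat_add of_rat_mult)
  then have "poly (map_poly of_rat s * map_poly of_rat p + map_poly of_rat t * map_poly of_rat q) z = (1::complex)"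
    by simp
  then show False using assms(2,3) by simp
qed

lemma cf_deg: "degree (cf (Suc m)) = m" "lead_coeff (cf (Suc m)) = 1"
proof -
  have "degree (map_poly (of_int :: int \<Rightarrow> complex) (fib_poly (Suc m))) = degree (fib_poly (Suc m))"
    by (rule degree_map_poly) simp
  then show "degree (cf (Suc m)) = m" using fib_deg[of m] by (simp add: cf_def)
  moreover have "poly.coeff (fib_poly (Suc m)) m = 1" using fib_deg[of m] by auto
  ultimately show "lead_coeff (cf (Suc m)) = 1"
    by (simp add: cf_def coeff_map_poly)
qed

lemma rf_deg: "degree (rf (Suc m)) = m" "lead_coeff (rf (Suc m)) = 1"
proof -
  have "degree (map_poly (of_int :: int \<Rightarrow> rat) (fib_poly (Suc m))) = degree (fib_poly (Suc m))"
    by (rule degree_map_poly) simp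
  then show "degree (rf (Suc m)) = m" using fib_deg[of m] by (simp add: rf_def)
  moreover have "poly.coeff (fib_poly (Suc m)) m = 1" using fib_deg[of m] by auto
  ultimately show "lead_coeff (rf (Suc m)) = 1"
    by (simp add: rf_def coeff_map_poly)
qed

lemma cf_factor:
  assumes "1 \<le> n"
  shows "cf n = (\<Prod>k\<in>{1..<n}. [:-rr n k, 1:])"
proof -
  have inj: "inj_on (rr n) {1..<n}" by (rule inj_onI) (auto intro: rr_inj)
  have roots: "poly (cf n) r = 0" if "r \<in> rr n ` {1..<n}" for r
    using that rr_root_iff[of _ n n] by auto
  have d: "(\<Prod>r\<in>rr n ` {1..<n}. [:-r, 1:]) dvd cf n"
    by (rule roots_prod_dvd) (use roots in auto)
  have e: "(\<Prod>r\<in>rr n ` {1..<n}. [:-r, 1:]) = (\<Prod>k\<in>{1..<n}. [:-rr n k, 1:])"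
    using prod.reindex[OF inj, of "\<lambda>r. [:-r,1:]"] by (simp del: mult_pCons_left)
  obtain m where m: "n = Suc m" using assms by (cases n) auto
  have deg: "degree (\<Prod>k\<in>{1..<n}. [:-rr n k, 1:]) = n - 1"
    using degree_lin_prod[of "rr n ` {1..<n}"] e card_image[OF inj] by simp
  have mo: "lead_coeff (\<Prod>k\<in>{1..<n}. [:-rr n k, 1:]) = 1"
    by (simp add: lead_coeff_prod del: mult_pCons_left)
  have d2: "(\<Prod>k\<in>{1..<n}. [:-rr n k, 1:]) dvd cf n" using d e by simp
  have nz: "cf n \<noteq> 0" using cf_deg(2)[of m] m by auto
  have dg: "degree (cf n) \<le> degree (\<Prod>k\<in>{1..<n}. [:-rr n k, 1:])" using deg cf_deg(1)[of m] m by simp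
  show ?thesis using monic_dvd_eq[OF d2 nz dg mo] cf_deg(2)[of m] m by simp
qed

declare mult_pCons_left[simp del]

definition SS :: "nat \<Rightarrow> rat poly set" where
  "SS n = {p :: rat poly. lead_coeff p = 1 \<and> irreducible p
      \<and> p dvd map_poly of_int (fib_poly n)
      \<and> (\<forall>k. 1 \<le> k \<and> k < n \<longrightarrow> \<not> p dvd map_poly of_int (fib_poly k))}"

lemma fibotomic_SS: "fibotomic n = \<Prod>(SS n)"
  by (simp add: fibotomic_def SS_def)

lemma SS_iff: "p \<in> SS n \<longleftrightarrow> lead_coeff p = 1 \<and> irreducible p \<and> p dvd rf n \<and> (\<forall>k. 1 \<le> k \<and> k < n \<longrightarrow> \<not> p dvd rf k)"
  by (simp add: SS_def rf_def)

lemma rf_nz: "1 \<le> n \<Longrightarrow> rf n \<noteq> 0"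
  using rf_deg(2)[of "n - 1"] by (cases n) auto

lemma SS_prime: assumes "1 \<le> n" "p \<in> SS n" shows "prime p" "p \<in> prime_factors (rf n)"
proof -
  have "prime_elem p" using assms(2) by (simp add: SS_iff prime_elem_iff_irreducible)
  moreover have "normalize p = p" using assms(2) by (simp add: SS_iff monic_normalize)
  ultimately show "prime p" by (simp add: prime_def)
  then show "p \<in> prime_factors (rf n)" using assms rf_nz by (simp add: in_prime_factors_iff SS_iff)
qed

lemma SS_finite: "1 \<le> n \<Longrightarrow> finite (SS n)"
proof (rule finite_subset[of _ "prime_factors (rf n)"])
  show "1 \<le> n \<Longrightarrow> SS n \<subseteq> prime_factors (rf n)" using SS_prime(2) by blast
qed simp

lemma SS_prod_dvd: assumes "1 \<le> n" shows "\<Prod>(SS n) dvd rf n"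
proof -
  have "finite A \<Longrightarrow> A \<subseteq> SS n \<Longrightarrow> \<Prod>A dvd rf n" for A
  proof (induction A rule: finite_induct)
    case empty then show ?case by simp
  next
    case (insert a F)
    have a: "a \<in> SS n" "prime a" using insert.prems SS_prime[OF assms] by auto
    have "coprime a (\<Prod>F)"
      by (rule prod_coprime_right) (use insert SS_prime[OF assms] in \<open>auto intro!: primes_coprime\<close>)
    moreover have "a dvd rf n" using a by (simp add: SS_iff)
    ultimately show ?case using insert by (simp add: divides_mult)
  qed
  then show ?thesis using SS_finite[OF assms] by blast
qed

lemma map_dvd: "(p::rat poly) dvd q \<Longrightarrow> (map_poly of_rat p :: complex poly) dvd map_poly of_rat q"
  by (elim dvdE) (simp add: map_poly_mult_h of_rat_add of_rat_mult)

lemma mset_root: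
  "poly (map_poly (of_rat :: rat \<Rightarrow> complex) (prod_mset A)) z = 0 \<Longrightarrow> \<exists>p\<in>#A. poly (map_poly of_rat p) z = 0"
proof (induction A)
  case empty then show ?case by simp
next
  case (add x A)
  then show ?case by (auto simp: map_poly_mult_h of_rat_add of_rat_mult)
qed

definition KK :: "nat \<Rightarrow> nat set" where "KK n = {k. 1 \<le> k \<and> k \<le> n \<and> coprime k n}"

lemma KK_lt: "2 \<le> n \<Longrightarrow> k \<in> KK n \<Longrightarrow> 1 \<le> k \<and> k < n"
proof -
  assume "2 \<le> n" "k \<in> KK n"
  moreover have "k \<noteq> n" using calculation by (auto simp: KK_def)
  ultimately show ?thesis by (auto simp: KK_def)
qed

lemma KK_sub: assumes "2 \<le> n" shows "KK n \<subseteq> {1..<n}"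
proof
  fix k assume "k \<in> KK n"
  then show "k \<in> {1..<n}" using KK_lt[OF assms] by simp
qed

lemma MM_prod: "1 \<le> n \<Longrightarrow> map_poly (of_rat :: rat \<Rightarrow> complex) (fibotomic n) = (\<Prod>p\<in>SS n. map_poly of_rat p)"
  unfolding fibotomic_SS by (rule map_poly_prod_h) (simp_all add: of_rat_add of_rat_mult)

lemma cf_roots: assumes "1 \<le> n" "poly (cf n) z = 0" shows "\<exists>k\<in>{1..<n}. z = rr n k"
proof -
  have "poly (\<Prod>k\<in>{1..<n}. [:-rr n k, 1:]) z = 0" using assms(2) cf_factor[OF assms(1)] by simp
  then have "(\<Prod>k\<in>{1..<n}. poly [:-rr n k, 1:] z) = 0" by (simp only: poly_prod)
  then have "\<exists>k\<in>{1..<n}. poly [:-rr n k, 1:] z = 0" by (simp only: prod_zero_iff[OF finite_atLeastLessThan])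
  then obtain k where k: "k \<in> {1..<n}" "poly [:-rr n k, 1:] z = 0" by (elim bexE)
  from k(2) have "z = rr n k" by simp
  with k(1) show ?thesis by (intro bexI)
qed

lemma R1:
  assumes n: "2 \<le> n" and z: "poly (map_poly (of_rat :: rat \<Rightarrow> complex) (fibotomic n)) z = 0"
  shows "\<exists>k\<in>KK n. z = rr n k"
proof -
  have n1: "1 \<le> n" using n by simp
  have "(\<Prod>p\<in>SS n. poly (map_poly of_rat p) z) = 0" using z MM_prod[OF n1] by (simp add: poly_prod)
  then obtain p where p: "p \<in> SS n" "poly (map_poly (of_rat :: rat \<Rightarrow> complex) p) z = 0"
  proof -
    from \<open>(\<Prod>p\<in>SS n. poly (map_poly of_rat p) z) = 0\<close>
    have "\<exists>p\<in>SS n. poly (map_poly (of_rat :: rat \<Rightarrow> complex) p) z = 0"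
      by (simp only: prod_zero_iff[OF SS_finite[OF n1]])
    then show ?thesis using that by (elim bexE)
  qed
  have "map_poly (of_rat :: rat \<Rightarrow> complex) p dvd cf n"
    using map_dvd[of p "rf n"] p(1) by (simp add: SS_iff rf_cf)
  then have "poly (cf n) z = 0" using p(2) by (metis dvdE mult_eq_0_iff poly_mult)
  then obtain k where k: "k \<in> {1..<n}" "z = rr n k" using cf_roots[OF n1] by blast
  have "coprime k n"
  proof (rule ccontr)
    assume nc: "\<not> coprime k n"
    define g where "g = gcd k n"
    have g1: "g \<noteq> 1" using nc coprime_iff_gcd_eq_1[of k n] unfolding g_def by blast
    have g0: "g > 0" using k by (simp add: g_def)
    have "g dvd n" by (simp add: g_def)
    then obtain j where j: "n = g * j" by (elim dvdE)
    have "g dvd k" by (simp add: g_def)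
    then obtain l where l: "k = g * l" by (elim dvdE)
    have j1: "1 \<le> j" using j n by (cases j) auto
    have g2: "1 < g" using g0 g1 by linarith
    have "1 * j < g * j" using g2 j1 by (intro mult_strict_right_mono) auto
    then have jn: "j < n" using j by simp
    have "j * k = n * l" using j l by simp
    then have "n dvd j * k" by simp
    then have "poly (cf j) z = 0" using rr_root_iff[of k n j] k by simp
    then have "poly (map_poly (of_rat :: rat \<Rightarrow> complex) (rf j)) z = 0" by (simp add: rf_cf)
    then have "p dvd rf j" using share_root_dvd[of p z "rf j"] p by (simp add: SS_iff)
    then show False using p(1) j1 jn by (simp add: SS_iff)
  qed
  then show ?thesis using k by (auto simp: KK_def)
qed

lemma R2:
  assumes n: "2 \<le> n" and k: "k \<in> KK n"
  shows "poly (map_poly (of_rat :: rat \<Rightarrow> complex) (fibotomic n)) (rr n k) = 0"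
proof -
  have n1: "1 \<le> n" using n by simp
  have k1: "1 \<le> k" "k < n" using KK_lt[OF n k] by auto
  have cop: "coprime k n" using k by (simp add: KK_def)
  have "poly (cf n) (rr n k) = 0" using rr_root_iff[of k n n] k1 by simp
  moreover have "prod_mset (prime_factorization (rf n)) = rf n"
    using rf_nz[OF n1] rf_deg(2)[of "n - 1"] n1 by (simp add: prod_mset_prime_factorization monic_normalize)
  ultimately have "poly (map_poly (of_rat :: rat \<Rightarrow> complex) (prod_mset (prime_factorization (rf n)))) (rr n k) = 0"
    by (simp add: rf_cf)
  then obtain p where p: "p \<in># prime_factorization (rf n)" "poly (map_poly (of_rat :: rat \<Rightarrow> complex) p) (rr n k) = 0"
    using mset_root by blast
  have pp: "prime p" "p dvd rf n" using p(1) by (auto simp: in_prime_factors_iff)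
  have "p \<in> SS n"
  proof -
    have "irreducible p" using pp(1) prime_elem_iff_irreducible by (auto simp: prime_def)
    moreover have "lead_coeff p = 1" using pp(1) normalize_monic[of p] by (auto simp: prime_def)
    moreover have "\<not> p dvd rf j" if "1 \<le> j" "j < n" for j
    proof
      assume "p dvd rf j"
      then have "map_poly (of_rat :: rat \<Rightarrow> complex) p dvd cf j" using map_dvd by (fastforce simp: rf_cf)
      then have "poly (cf j) (rr n k) = 0" using p(2) by (metis dvdE mult_eq_0_iff poly_mult)
      then have "n dvd j * k" using rr_root_iff[of k n j] k1 by simp
      then have "n dvd j" using cop by (metis coprime_commute coprime_dvd_mult_left_iff)
      then show False using that by (simp add: nat_dvd_not_less)
    qed
    ultimately show ?thesis using pp(2) by (simp add: SS_iff)
  qed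
  have "poly (map_poly (of_rat :: rat \<Rightarrow> complex) (fibotomic n)) (rr n k)
      = (\<Prod>q\<in>SS n. poly (map_poly of_rat q) (rr n k))"
    by (simp only: MM_prod[OF n1] poly_prod)
  also have "\<dots> = 0"
  proof -
    have "\<exists>q\<in>SS n. poly (map_poly (of_rat :: rat \<Rightarrow> complex) q) (rr n k) = 0"
      using \<open>p \<in> SS n\<close> p(2) by (intro bexI)
    then show ?thesis by (simp only: prod_zero_iff[OF SS_finite[OF n1]])
  qed
  finally show ?thesis .
qed

lemma fib_monic: "1 \<le> n \<Longrightarrow> lead_coeff (fibotomic n) = 1"
  unfolding fibotomic_SS by (simp add: lead_coeff_prod SS_iff)

lemma MM_eq:
  assumes n: "2 \<le> n"
  shows "map_poly (of_rat :: rat \<Rightarrow> complex) (fibotomic n) = (\<Prod>k\<in>KK n. [:-rr n k, 1:])"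
proof -
  have n1: "1 \<le> n" using n by simp
  define M where "M = map_poly (of_rat :: rat \<Rightarrow> complex) (fibotomic n)"
  define L where "L = (\<lambda>k. [:-rr n k, 1::complex:])"
  have fin: "finite (KK n)" using KK_sub[OF n] finite_subset by blast
  have inj: "inj_on (rr n) (KK n)"
  proof (rule inj_onI)
    fix x y assume xy: "x \<in> KK n" "y \<in> KK n" "rr n x = rr n y"
    have "1 \<le> x \<and> x < n" "1 \<le> y \<and> y < n" using KK_lt[OF n xy(1)] KK_lt[OF n xy(2)] by auto
    then show "x = y" using rr_inj[of x n y] xy(3) by simp
  qed
  have Mm: "lead_coeff M = 1" unfolding M_def
    by (subst lead_coeff_map_poly_nz) (simp_all add: fib_monic[OF n1])
  have M0: "M \<noteq> 0" using Mm by auto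
  have "(\<Prod>r\<in>rr n ` KK n. [:-r, 1:]) dvd M"
    by (rule roots_prod_dvd) (use fin R2[OF n] in \<open>auto simp: M_def\<close>)
  moreover have "(\<Prod>r\<in>rr n ` KK n. [:-r, 1:]) = (\<Prod>k\<in>KK n. L k)"
    using prod.reindex[OF inj, of "\<lambda>r. [:-r,1:]"] by (simp add: L_def)
  ultimately have d1: "(\<Prod>k\<in>KK n. L k) dvd M" by simp
  then obtain q where q: "M = (\<Prod>k\<in>KK n. L k) * q" by (elim dvdE)
  have "M dvd cf n" unfolding M_def using map_dvd[OF SS_prod_dvd[OF n1]]
    by (simp add: fibotomic_SS rf_cf)
  moreover have "cf n = (\<Prod>k\<in>{1..<n} - KK n. L k) * (\<Prod>k\<in>KK n. L k)"
    using cf_factor[OF n1] prod.subset_diff[OF KK_sub[OF n] finite_atLeastLessThan, of L]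
    by (simp add: L_def)
  ultimately have "(\<Prod>k\<in>KK n. L k) * q dvd (\<Prod>k\<in>KK n. L k) * (\<Prod>k\<in>{1..<n} - KK n. L k)"
    using q by (simp add: mult.commute)
  moreover have "(\<Prod>k\<in>KK n. L k) \<noteq> 0" using q M0 by auto
  ultimately have qd: "q dvd (\<Prod>k\<in>{1..<n} - KK n. L k)" by simp
  have "degree q = 0"
  proof (rule ccontr)
    assume "degree q \<noteq> 0"
    then have "\<not> constant (poly q)" by (simp add: constant_degree)
    then obtain z where z: "poly q z = 0" using fundamental_theorem_of_algebra by blast
    have "poly M z = 0" using q z by simp
    then obtain k where k: "k \<in> KK n" "z = rr n k" using R1[OF n] unfolding M_def by blast
    have "poly (\<Prod>k\<in>{1..<n} - KK n. L k) z = 0" using qd z by (metis dvdE mult_eq_0_iff poly_mult)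
    then have "(\<Prod>k\<in>{1..<n} - KK n. poly (L k) z) = 0" by (simp only: poly_prod)
    then have "\<exists>j\<in>{1..<n} - KK n. poly (L j) z = 0"
      by (simp only: prod_zero_iff[OF finite_Diff[OF finite_atLeastLessThan]])
    then obtain j where j: "j \<in> {1..<n} - KK n" "poly (L j) z = 0" by (elim bexE)
    have "z = rr n j" using j(2) by (simp add: L_def)
    then have "rr n j = rr n k" using k by simp
    moreover have "1 \<le> k \<and> k < n" using KK_lt[OF n k(1)] .
    ultimately have "j = k" using j(1) by (intro rr_inj) auto
    then show False using j(1) k(1) by simp
  qed
  then obtain c where c: "q = [:c:]" by (elim degree_eq_zeroE)
  have "lead_coeff (\<Prod>k\<in>KK n. L k) = 1" by (simp add: lead_coeff_prod L_def)
  then have "lead_coeff M = c" using q c by (simp add: lead_coeff_mult)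
  then have "c = 1" using Mm by simp
  then show ?thesis using q c by (simp add: M_def L_def)
qed

lemma cis_sum: "cis a + cis (-a) = 2 * complex_of_real (cos a)"
  by (simp add: complex_eq_iff)

lemma fac1:
  fixes w :: complex
  assumes "w \<noteq> 0"
  shows "w - 1 / w - 2 * \<i> * complex_of_real (cos a) = (w - \<i> * cis a) * (w - \<i> * cis (-a)) / w"
proof -
  have "(w - \<i> * cis a) * (w - \<i> * cis (-a)) = w * w - \<i> * w * (cis a + cis (-a)) + \<i> * \<i> * (cis a * cis (-a))"
    by (simp add: algebra_simps)
  also have "\<dots> = w * w - 2 * \<i> * w * complex_of_real (cos a) - 1"
    by (simp add: cis_sum cis_mult)
  finally show ?thesis using assms by (simp add: field_simps)
qed

lemma fac2:
  fixes w :: complex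
  shows "- (w * w) - cis (2 * a) = - ((w - \<i> * cis a) * (w + \<i> * cis a))"
proof -
  have "cis (2 * a) = cis a * cis a" by (simp add: cis_mult)
  then show ?thesis by (simp add: algebra_simps)
qed

lemma cis_shift: "cis (- (b - pi)) = - cis (-b)"
proof -
  have e: "- (b - pi) = -b + pi" by simp
  show ?thesis unfolding e cis_mult[symmetric] cis_pi by simp
qed

lemma KK_card: "card (KK n) = totient n"
proof -
  have "KK n = totatives n" by (auto simp: KK_def totatives_def)
  then show ?thesis by (simp add: totient_def)
qed

lemma KK_refl: assumes n: "2 \<le> n" and k: "k \<in> KK n" shows "n - k \<in> KK n"
proof -
  have k1: "1 \<le> k" "k < n" using KK_lt[OF n k] by auto
  have "coprime (n - k) n"
  proof (rule coprimeI)
    fix d assume d: "d dvd n - k" "d dvd n"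
    then have "d dvd n - (n - k)" by (rule dvd_diff_nat[rotated])
    then have "d dvd k" using k1 by simp
    moreover have "coprime k n" using k by (simp add: KK_def)
    ultimately show "is_unit d" using d(2) coprime_common_divisor by blast
  qed
  then show ?thesis using k1 by (simp add: KK_def)
qed

lemma prod_flip:
  assumes n: "2 \<le> n"
  shows "(\<Prod>k\<in>KK n. f (n - k)) = (\<Prod>k\<in>KK n. (f k :: complex))"
proof -
  have A: "n - (n - k) = k" if "k \<in> KK n" for k
  proof -
    have "k < n" using KK_lt[OF n that] by auto
    then show ?thesis by simp
  qed
  have B: "n - k \<in> KK n" if "k \<in> KK n" for k using KK_refl[OF n that] .
  show ?thesis by (rule prod.reindex_bij_witness[of _ "\<lambda>k. n - k" "\<lambda>k. n - k"]) (simp_all add: A B)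
qed

lemma cis_shift2: "cis (b - pi) = - cis b"
  by (simp add: cis_divide[symmetric])

lemma LHS_eval:
  assumes n: "2 \<le> n"
  shows "complex_of_real (poly (map_poly of_rat (fibotomic n)) x) = (\<Prod>k\<in>KK n. complex_of_real x - rr n k)"
proof -
  have "complex_of_real (poly (map_poly of_rat (fibotomic n)) x)
      = poly (map_poly complex_of_real (map_poly (of_rat :: rat \<Rightarrow> real) (fibotomic n))) (complex_of_real x)"
    by (rule poly_map_poly_h) simp_all
  also have "map_poly complex_of_real (map_poly (of_rat :: rat \<Rightarrow> real) (fibotomic n)) = map_poly of_rat (fibotomic n)"
    by (subst map_poly_map_poly) (simp_all add: o_def of_real_of_rat_c)
  also have "\<dots> = (\<Prod>k\<in>KK n. [:-rr n k, 1:])" by (rule MM_eq[OF n])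
  finally show ?thesis by (simp add: poly_prod)
qed

theorem main_aux:
  fixes n :: nat and x :: real
  assumes "n \<ge> 2"
  defines "\<omega> \<equiv> (x + sqrt (x\<^sup>2 + 4)) / 2"
  shows "complex_of_real (poly (map_poly of_rat (fibotomic n)) x) =
           (if n = 2 then -1 else 1) * poly (cyclotomic n) (complex_of_real (- (\<omega>\<^sup>2)))
             / complex_of_real (\<omega> ^ totient n)"
proof -
  have n: "2 \<le> n" using assms by simp
  have fin: "finite (KK n)" using KK_sub[OF n] finite_subset by blast
  have sq: "sqrt (x\<^sup>2 + 4) > \<bar>x\<bar>"
    by (rule real_less_rsqrt) simp
  have "0 < x + sqrt (x\<^sup>2 + 4)" using sq abs_ge_minus_self[of x] by linarith
  then have om0: "\<omega> > 0" unfolding \<omega>_def by simp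
  have "\<omega> * \<omega> = x * \<omega> + 1"
  proof -
    have s2: "sqrt (x\<^sup>2 + 4) * sqrt (x\<^sup>2 + 4) = x\<^sup>2 + 4" by (simp add: add_nonneg_nonneg)
    show ?thesis unfolding \<omega>_def using s2 by (simp add: field_simps power2_eq_square)
  qed
  then have xom: "x = \<omega> - 1 / \<omega>" using om0 by (simp add: field_simps)
  define w where "w = complex_of_real \<omega>"
  have w0: "w \<noteq> 0" using om0 by (simp add: w_def)
  have xw: "complex_of_real x = w - 1 / w" by (simp add: xom w_def)
  define a where "a = (\<lambda>k::nat. real k * pi / real n)"
  define P where "P = (\<lambda>k. w - \<i> * cis (a k))"
  define Q where "Q = (\<lambda>k. w - \<i> * cis (- a k))"
  define R where "R = (\<lambda>k. w + \<i> * cis (a k))"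
  have "complex_of_real (poly (map_poly of_rat (fibotomic n)) x) = (\<Prod>k\<in>KK n. P k * Q k / w)"
  proof -
    have "complex_of_real x - rr n k = P k * Q k / w" for k
      unfolding xw rr_def P_def Q_def a_def using fac1[OF w0, of "real k * pi / real n"] by simp
    then show ?thesis using LHS_eval[OF n, of x] by simp
  qed
  also have "\<dots> = (\<Prod>k\<in>KK n. P k) * (\<Prod>k\<in>KK n. Q k) / w ^ totient n"
    by (simp add: prod_dividef prod.distrib KK_card)
  finally have L: "complex_of_real (poly (map_poly of_rat (fibotomic n)) x) = (\<Prod>k\<in>KK n. P k) * (\<Prod>k\<in>KK n. Q k) / w ^ totient n" .
  have RQ: "(\<Prod>k\<in>KK n. R k) = (\<Prod>k\<in>KK n. Q k)"
  proof -
    have "Q (n - k) = R k" if "k \<in> KK n" for k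
    proof -
      have "k < n" using KK_lt[OF n that] by auto
      then have "- a (n - k) = a k - pi" using n by (simp add: a_def of_nat_diff field_simps)
      then show ?thesis by (simp add: Q_def R_def cis_shift2)
    qed
    then have "(\<Prod>k\<in>KK n. Q (n - k)) = (\<Prod>k\<in>KK n. R k)" by (rule prod.cong[OF refl])
    then show ?thesis using prod_flip[OF n, of Q] by simp
  qed
  have "poly (cyclotomic n) (complex_of_real (- (\<omega>\<^sup>2))) = (\<Prod>k\<in>KK n. - (w * w) - cis (2 * pi * real k / real n))"
    unfolding cyclotomic_def KK_def[symmetric] by (simp add: poly_prod w_def power2_eq_square algebra_simps)
  also have "\<dots> = (\<Prod>k\<in>KK n. - (P k * R k))"
  proof (rule prod.cong[OF refl])
    fix k
    have "2 * pi * real k / real n = 2 * a k" by (simp add: a_def)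
    then show "- (w * w) - cis (2 * pi * real k / real n) = - (P k * R k)"
      unfolding P_def R_def using fac2 by simp
  qed
  also have "\<dots> = (\<Prod>k\<in>KK n. (-1) * (P k * R k))" by simp
  also have "\<dots> = (\<Prod>k\<in>KK n. (-1::complex)) * (\<Prod>k\<in>KK n. P k * R k)" by (rule prod.distrib)
  also have "\<dots> = (-1) ^ totient n * ((\<Prod>k\<in>KK n. P k) * (\<Prod>k\<in>KK n. R k))"
    by (simp only: prod_constant KK_card prod.distrib)
  finally have C: "poly (cyclotomic n) (complex_of_real (- (\<omega>\<^sup>2))) = (-1) ^ totient n * ((\<Prod>k\<in>KK n. P k) * (\<Prod>k\<in>KK n. Q k))"
    using RQ by simp
  have sgn: "(if n = 2 then -1 else 1) * (-1) ^ totient n = (1::complex)"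
  proof (cases "n = 2")
    case True then show ?thesis by simp
  next
    case False
    then have "even (totient n)" using n by (intro totient_even) simp
    then show ?thesis using False by simp
  qed
  have "(if n = 2 then -1 else 1) * poly (cyclotomic n) (complex_of_real (- (\<omega>\<^sup>2))) / complex_of_real (\<omega> ^ totient n)
      = ((if n = 2 then -1 else 1) * (-1) ^ totient n) * ((\<Prod>k\<in>KK n. P k) * (\<Prod>k\<in>KK n. Q k)) / w ^ totient n"
    unfolding C by (simp add: w_def)
  also have "\<dots> = (\<Prod>k\<in>KK n. P k) * (\<Prod>k\<in>KK n. Q k) / w ^ totient n" by (simp only: sgn mult_1)
  finally show ?thesis using L by simp
qed

theorem mainTheorem4:
  fixes n :: nat and x :: real
  assumes "n \<ge> 2"
  defines "\<omega> \<equiv> (x + sqrt (x\<^sup>2 + 4)) / 2"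
  shows "complex_of_real (poly (map_poly of_rat (fibotomic n)) x) =
           (if n = 2 then -1 else 1) * poly (cyclotomic n) (complex_of_real (- (\<omega>\<^sup>2)))
             / complex_of_real (\<omega> ^ totient n)"
  unfolding \<omega>_def by (rule main_aux[OF assms(1)])

end
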